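(* Let $\Phi$ be a convex growth function and $\alpha > -1$. Then there exists $C=C_{\alpha}>0$ such that for any $f\in A^{\Phi}_{\alpha}(\mathbb{C}_+)$ and any $z= x+iy \in \mathbb{C}_+$, $$|f(z)|\leq C\, \Phi^{-1}\left(\frac{1}{ y^{\alpha+2}}\right)\|f\|_{\Phi,\alpha}^{lux}.$$
   Context: $\mathbb{C}_+=\{x+iy: y>0\}$. A growth function is a continuous nondecreasing function from $[0,\infty)$ onto $[0,\infty)$; $\Phi^{-1}$ is its inverse. $dV_\alpha(x+iy)=y^\alpha dxdy$; $A^\Phi_\alpha(\mathbb{C}_+)$ is the space of holomorphic $f$ on $\mathbb{C}_+$ with $\int\Phi(|f|)dV_\alpha<\infty$, and $\|f\|^{lux}_{\Phi,\alpha}=\inf\{\lambda>0:\int_{\mathbb{C}_+}\Phi(|f|/\lambda)dV_\alpha\le1\}$. *)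

theory Defs
  imports "HOL-Analysis.Analysis"
begin

definition upper_half_plane :: "complex set" where
  "upper_half_plane = {z. Im z > 0}"

definition growth_function :: "(real \<Rightarrow> real) \<Rightarrow> bool" where
  "growth_function \<Phi> \<longleftrightarrow>
     continuous_on {0..} \<Phi> \<and> mono_on {0..} \<Phi> \<and> \<Phi> ` {0..} = {0..}"

text \<open>Inverse of a growth function (generalised inverse; for t > 0 and convex
  growth functions this is the genuine inverse).\<close>
definition growth_inv :: "(real \<Rightarrow> real) \<Rightarrow> real \<Rightarrow> real" where
  "growth_inv \<Phi> t = Inf {s. 0 \<le> s \<and> t \<le> \<Phi> s}"

definition orlicz_modular :: "(real \<Rightarrow> real) \<Rightarrow> real \<Rightarrow> (complex \<Rightarrow> complex) \<Rightarrow> ennreal" where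
  "orlicz_modular \<Phi> \<alpha> f =
     (\<integral>\<^sup>+ z. indicator upper_half_plane z * ennreal (\<Phi> (cmod (f z)) * (Im z) powr \<alpha>) \<partial>lborel)"

definition bergman_orlicz :: "(real \<Rightarrow> real) \<Rightarrow> real \<Rightarrow> (complex \<Rightarrow> complex) set" where
  "bergman_orlicz \<Phi> \<alpha> =
     {f. f holomorphic_on upper_half_plane \<and> orlicz_modular \<Phi> \<alpha> f < \<infinity>}"

definition lux_norm :: "(real \<Rightarrow> real) \<Rightarrow> real \<Rightarrow> (complex \<Rightarrow> complex) \<Rightarrow> real" where
  "lux_norm \<Phi> \<alpha> f = Inf {r. r > 0 \<and> orlicz_modular \<Phi> \<alpha> (\<lambda>z. f z / of_real r) \<le> 1}"

end

theory Submission
  imports Defs "HOL-Probability.Probability" "HOL-Complex_Analysis.Complex_Analysis"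
begin

lemma lborel_complex_eq:
  "(lborel :: complex measure) = distr (lborel \<Otimes>\<^sub>M lborel) borel (\<lambda>(x,y). Complex x y)"
proof (rule lborel_eqI)
  fix l u :: complex assume lu: "\<And>b. b\<in>Basis \<Longrightarrow> l \<bullet> b \<le> u \<bullet> b"
  then have le: "Re l \<le> Re u" "Im l \<le> Im u"
    using lu[of 1] lu[of \<i>] by (auto simp: Basis_complex_def)
  have meas: "(\<lambda>(x,y). Complex x y) \<in> (lborel \<Otimes>\<^sub>M lborel) \<rightarrow>\<^sub>M borel"
    unfolding Complex_eq case_prod_beta by measurable
  have pre: "(\<lambda>(x,y). Complex x y) -` box l u \<inter> space (lborel \<Otimes>\<^sub>M lborel) = {Re l<..<Re u} \<times> {Im l<..<Im u}"
    by (auto simp: box_def Basis_complex_def space_pair_measure)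
  have "emeasure (distr (lborel \<Otimes>\<^sub>M lborel) borel (\<lambda>(x,y). Complex x y)) (box l u)
      = emeasure (lborel \<Otimes>\<^sub>M lborel) ({Re l<..<Re u} \<times> {Im l<..<Im u})"
    by (subst emeasure_distr[OF meas]) (auto simp: pre)
  also have "\<dots> = ennreal (Re u - Re l) * ennreal (Im u - Im l)"
    by (subst lborel.emeasure_pair_measure_Times) (auto simp: le)
  also have "\<dots> = (\<Prod>b\<in>Basis. (u - l) \<bullet> b)"
    using le by (simp add: Basis_complex_def ennreal_mult)
  finally show "emeasure (distr (lborel \<Otimes>\<^sub>M lborel) borel (\<lambda>(x,y). Complex x y)) (box l u) = (\<Prod>b\<in>Basis. (u - l) \<bullet> b)" .
qed simp

lemma nn_integral_complex_fubini:
  fixes G :: "complex \<Rightarrow> ennreal"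
  assumes G[measurable]: "G \<in> borel_measurable borel"
  shows "(\<integral>\<^sup>+w. G w \<partial>lborel) = (\<integral>\<^sup>+y. (\<integral>\<^sup>+x. G (Complex x y) \<partial>lborel) \<partial>lborel)"
    and "(\<integral>\<^sup>+w. G w \<partial>lborel) = (\<integral>\<^sup>+x. (\<integral>\<^sup>+y. G (Complex x y) \<partial>lborel) \<partial>lborel)"
proof -
  have meas: "(\<lambda>(x,y). Complex x y) \<in> (lborel \<Otimes>\<^sub>M lborel) \<rightarrow>\<^sub>M borel"
    unfolding Complex_eq case_prod_beta by measurable
  have m2: "(\<lambda>p. G (Complex (fst p) (snd p))) \<in> borel_measurable (lborel \<Otimes>\<^sub>M lborel)"
    using measurable_comp[OF meas G] by (simp add: o_def case_prod_beta)
  have eq: "(\<integral>\<^sup>+w. G w \<partial>lborel) = (\<integral>\<^sup>+p. G (Complex (fst p) (snd p)) \<partial>(lborel \<Otimes>\<^sub>M lborel))"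
    by (subst lborel_complex_eq, subst nn_integral_distr[OF meas]) (auto simp: case_prod_beta)
  show "(\<integral>\<^sup>+w. G w \<partial>lborel) = (\<integral>\<^sup>+y. (\<integral>\<^sup>+x. G (Complex x y) \<partial>lborel) \<partial>lborel)"
    unfolding eq using lborel_pair.nn_integral_snd[OF m2] by simp
  show "(\<integral>\<^sup>+w. G w \<partial>lborel) = (\<integral>\<^sup>+x. (\<integral>\<^sup>+y. G (Complex x y) \<partial>lborel) \<partial>lborel)"
    unfolding eq using lborel.nn_integral_fst[OF m2] by simp
qed


lemma contour_integral_linepath_same_Im:
  assumes "a < b"
  shows   "contour_integral (linepath (Complex a c) (Complex b c)) f =
           integral {a..b} (\<lambda>x. f (Complex x c))"
proof -
  have "contour_integral (linepath (Complex a c) (Complex b c)) f =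
         (Complex b c - Complex a c) * integral {0..1} (\<lambda>x. f (linepath (Complex a c) (Complex b c) x))"
    by (simp add: contour_integral_integral)
  also have "Complex b c - Complex a c = of_real (b - a)"
    by (simp add: complex_eq_iff)
  also have "integral {0..1} (\<lambda>x. f (linepath (Complex a c) (Complex b c) x)) =
             integral {0..1} (\<lambda>x. f (Complex (linepath a b x) c))"
    by (intro integral_cong arg_cong[where f=f]) (simp add: linepath_def complex_eq_iff algebra_simps)
  also have "\<dots> = integral {0..(b - a) / (b - a)} (\<lambda>x. f (Complex (a + (b - a) * x) c))"
    using \<open>a < b\<close> by (simp add: algebra_simps linepath_def)
  also have "{0..(b - a) / (b - a)} = (\<lambda>x. x / (b - a)) ` {0..b - a}"
    using \<open>a < b\<close> by simp
  also have "integral \<dots> (\<lambda>x. f (Complex (a + (b - a) * x) c)) =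
             integral {a-a..b-a} (\<lambda>x. f (Complex (x + a) c)) / of_real (b - a)"
    using \<open>a < b\<close> by (subst integral_stretch_real) (auto simp: scaleR_conv_of_real add_ac)
  also have "\<dots> = integral {a..b} (\<lambda>x. f (Complex x c)) / of_real (b - a)"
    by (subst integral_shift_real_ivl) (rule refl)
  finally show ?thesis
    using \<open>a < b\<close> by simp
qed


lemma horiz_bound:
  fixes F :: "complex \<Rightarrow> complex"
  assumes cont: "continuous_on {a..b} (\<lambda>x. F (Complex x c))" and h: "h > 0" "h \<le> \<bar>c - Im z\<bar>"
  shows "norm (integral {a..b} (\<lambda>x. F (Complex x c) / (Complex x c - z)))
           \<le> integral {a..b} (\<lambda>x. cmod (F (Complex x c))) / h"
proof -
  have nz: "Complex x c - z \<noteq> 0" for x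
    using h by (auto simp: complex_eq_iff)
  have c1: "continuous_on {a..b} (\<lambda>x. F (Complex x c) / (Complex x c - z))"
    using nz by (intro continuous_intros cont) (auto simp: Complex_eq)
  have c2: "continuous_on {a..b} (\<lambda>x. cmod (F (Complex x c)) / h)"
    using h(1) by (intro continuous_intros cont) auto
  have "norm (integral {a..b} (\<lambda>x. F (Complex x c) / (Complex x c - z)))
           \<le> integral {a..b} (\<lambda>x. cmod (F (Complex x c)) / h)"
  proof (rule integral_norm_bound_integral)
    show "(\<lambda>x. F (Complex x c) / (Complex x c - z)) integrable_on {a..b}"
      using c1 integrable_continuous_real by blast
    show "(\<lambda>x. cmod (F (Complex x c)) / h) integrable_on {a..b}"
      using c2 integrable_continuous_real by blast
    fix x assume "x \<in> {a..b}"
    have "h \<le> cmod (Complex x c - z)"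
      using h(2) abs_Im_le_cmod[of "Complex x c - z"] by simp
    then show "norm (F (Complex x c) / (Complex x c - z)) \<le> cmod (F (Complex x c)) / h"
      using h(1) by (simp add: norm_divide divide_left_mono mult_pos_pos frac_le)
  qed
  also have "\<dots> = integral {a..b} (\<lambda>x. cmod (F (Complex x c))) / h"
    by simp
  finally show ?thesis .
qed

lemma vert_bound:
  fixes F :: "complex \<Rightarrow> complex"
  assumes cont: "continuous_on {c..d} (\<lambda>y. F (Complex a y))" and h: "h > 0" "h \<le> \<bar>a - Re z\<bar>"
  shows "norm (integral {c..d} (\<lambda>y. F (Complex a y) / (Complex a y - z)))
           \<le> integral {c..d} (\<lambda>y. cmod (F (Complex a y))) / h"
proof -
  have nz: "Complex a y - z \<noteq> 0" for y
    using h by (auto simp: complex_eq_iff)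
  have c1: "continuous_on {c..d} (\<lambda>y. F (Complex a y) / (Complex a y - z))"
    using nz by (intro continuous_intros cont) (auto simp: Complex_eq)
  have c2: "continuous_on {c..d} (\<lambda>y. cmod (F (Complex a y)) / h)"
    using h(1) by (intro continuous_intros cont) auto
  have "norm (integral {c..d} (\<lambda>y. F (Complex a y) / (Complex a y - z)))
           \<le> integral {c..d} (\<lambda>y. cmod (F (Complex a y)) / h)"
  proof (rule integral_norm_bound_integral)
    show "(\<lambda>y. F (Complex a y) / (Complex a y - z)) integrable_on {c..d}"
      using c1 integrable_continuous_real by blast
    show "(\<lambda>y. cmod (F (Complex a y)) / h) integrable_on {c..d}"
      using c2 integrable_continuous_real by blast
    fix y assume "y \<in> {c..d}"
    have "h \<le> cmod (Complex a y - z)"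
      using h(2) abs_Re_le_cmod[of "Complex a y - z"] by simp
    then show "norm (F (Complex a y) / (Complex a y - z)) \<le> cmod (F (Complex a y)) / h"
      using h(1) by (simp add: norm_divide divide_left_mono mult_pos_pos frac_le)
  qed
  also have "\<dots> = integral {c..d} (\<lambda>y. cmod (F (Complex a y))) / h"
    by simp
  finally show ?thesis .
qed


lemma norm4_le:
  fixes p q r t :: complex
  shows "norm (p + \<i>*q + - r + - (\<i>*t)) \<le> norm p + norm q + norm r + norm t"
proof -
  have "norm (p + \<i>*q + - r + - (\<i>*t)) \<le> norm (p + \<i>*q + - r) + norm (\<i>*t)"
    by (metis norm_minus_cancel norm_triangle_ineq)
  also have "norm (p + \<i>*q + - r) \<le> norm (p + \<i>*q) + norm r"
    by (metis norm_minus_cancel norm_triangle_ineq)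
  also have "norm (p + \<i>*q) \<le> norm p + norm (\<i>*q)"
    by (rule norm_triangle_ineq)
  finally show ?thesis by (simp add: norm_mult)
qed

lemma rect_bound:
  fixes F :: "complex \<Rightarrow> complex"
  assumes holo: "F holomorphic_on cbox (Complex a c) (Complex b d)"
    and h: "h > 0" "a + h \<le> Re z" "Re z + h \<le> b" "c + h \<le> Im z" "Im z + h \<le> d"
  shows "2*pi*cmod (F z) * h \<le> integral {a..b} (\<lambda>x. cmod (F (Complex x c)))
        + integral {a..b} (\<lambda>x. cmod (F (Complex x d)))
        + integral {c..d} (\<lambda>y. cmod (F (Complex a y)))
        + integral {c..d} (\<lambda>y. cmod (F (Complex b y)))"
proof -
  define A1 where "A1 = Complex a c"
  define A2 where "A2 = Complex b c"
  define A3 where "A3 = Complex b d"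
  define A4 where "A4 = Complex a d"
  define g where "g w = F w / (w - z)" for w
  define K where "K = cbox A1 A3"
  have ab: "a < b" "c < d" using h by auto
  have zbox: "z \<in> box A1 A3" using h by (auto simp: A1_def A3_def in_box_complex_iff)
  have contF: "continuous_on K F"
    using holo holomorphic_on_imp_continuous_on K_def A1_def A3_def by blast
  have contg: "continuous_on (K - {z}) g"
    unfolding g_def by (intro continuous_intros continuous_on_subset[OF contF]) auto
  have le13: "Re A1 \<le> Re A3" "Im A1 \<le> Im A3" using ab by (auto simp: A1_def A3_def)
  have "(g has_contour_integral (2*pi*\<i>*winding_number (rectpath A1 A3) z * F z)) (rectpath A1 A3)"
    unfolding g_def
  proof (rule Cauchy_integral_formula_convex_simple[where S=K])
    show "convex K" by (simp add: K_def)
    show "F holomorphic_on K" using holo by (simp add: K_def A1_def A3_def)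
    show "z \<in> interior K" using zbox by (simp add: K_def interior_cbox)
    show "path_image (rectpath A1 A3) \<subseteq> K - {z}"
      using path_image_rectpath_cbox_minus_box[OF le13] zbox by (auto simp: K_def)
  qed auto
  hence CI: "contour_integral (rectpath A1 A3) g = 2*pi*\<i>*F z"
    using winding_number_rectpath[OF zbox] contour_integral_unique by auto
  have rp: "rectpath A1 A3 = linepath A1 A2 +++ linepath A2 A3 +++ linepath A3 A4 +++ linepath A4 A1"
    by (simp add: rectpath_def Let_def A1_def A2_def A3_def A4_def)
  have PI: "path_image (rectpath A1 A3) = closed_segment A1 A2 \<union> closed_segment A2 A3 \<union> closed_segment A3 A4 \<union> closed_segment A4 A1"
    unfolding rp by (simp add: path_image_join Un_assoc)
  have PK: "path_image (rectpath A1 A3) \<subseteq> K - {z}"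
    using path_image_rectpath_cbox_minus_box[OF le13] zbox by (auto simp: K_def)
  have segs: "closed_segment A1 A2 \<subseteq> K - {z}" "closed_segment A2 A3 \<subseteq> K - {z}"
     "closed_segment A3 A4 \<subseteq> K - {z}" "closed_segment A4 A1 \<subseteq> K - {z}"
    using PK unfolding PI by blast+
  have ci: "g contour_integrable_on linepath A1 A2" "g contour_integrable_on linepath A2 A3"
     "g contour_integrable_on linepath A3 A4" "g contour_integrable_on linepath A4 A1"
    using segs by (auto intro!: contour_integrable_continuous_linepath continuous_on_subset[OF contg])
  have split: "contour_integral (rectpath A1 A3) g = contour_integral (linepath A1 A2) g
     + contour_integral (linepath A2 A3) g + contour_integral (linepath A3 A4) g
     + contour_integral (linepath A4 A1) g"
    unfolding rp using ci
    by (simp add: contour_integrable_joinI valid_path_join add_ac)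
  have I1: "contour_integral (linepath A1 A2) g = integral {a..b} (\<lambda>x. g (Complex x c))"
    using ab by (simp add: A1_def A2_def contour_integral_linepath_same_Im)
  have I2: "contour_integral (linepath A2 A3) g = \<i> * integral {c..d} (\<lambda>y. g (Complex b y))"
    using ab by (intro contour_integral_linepath_same_Re) (auto simp: A2_def A3_def)
  have I3: "contour_integral (linepath A3 A4) g = - integral {a..b} (\<lambda>x. g (Complex x d))"
  proof -
    have "contour_integral (linepath A3 A4) g = - contour_integral (linepath A4 A3) g"
      using segs(3) by (intro contour_integral_reverse_linepath continuous_on_subset[OF contg]) auto
    also have "contour_integral (linepath A4 A3) g = integral {a..b} (\<lambda>x. g (Complex x d))"
      using ab by (simp add: A4_def A3_def contour_integral_linepath_same_Im)
    finally show ?thesis .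
  qed
  have I4: "contour_integral (linepath A4 A1) g = - (\<i> * integral {c..d} (\<lambda>y. g (Complex a y)))"
  proof -
    have "contour_integral (linepath A4 A1) g = - contour_integral (linepath A1 A4) g"
      using segs(4) by (intro contour_integral_reverse_linepath continuous_on_subset[OF contg])
         (auto simp: closed_segment_commute)
    also have "contour_integral (linepath A1 A4) g = \<i> * integral {c..d} (\<lambda>y. g (Complex a y))"
      using ab by (intro contour_integral_linepath_same_Re) (auto simp: A1_def A4_def)
    finally show ?thesis .
  qed
  have cF: "continuous_on {a..b} (\<lambda>x. F (Complex x c))" "continuous_on {a..b} (\<lambda>x. F (Complex x d))"
     "continuous_on {c..d} (\<lambda>y. F (Complex a y))" "continuous_on {c..d} (\<lambda>y. F (Complex b y))"
    using ab by (auto intro!: continuous_on_compose2[OF contF] continuous_intros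
        simp: Complex_eq[symmetric] K_def A1_def A3_def in_cbox_complex_iff)
  have B1: "norm (integral {a..b} (\<lambda>x. g (Complex x c))) \<le> integral {a..b} (\<lambda>x. cmod (F (Complex x c))) / h"
    unfolding g_def using h by (intro horiz_bound cF) auto
  have B3: "norm (integral {a..b} (\<lambda>x. g (Complex x d))) \<le> integral {a..b} (\<lambda>x. cmod (F (Complex x d))) / h"
    unfolding g_def using h by (intro horiz_bound cF) auto
  have B2: "norm (integral {c..d} (\<lambda>y. g (Complex b y))) \<le> integral {c..d} (\<lambda>y. cmod (F (Complex b y))) / h"
    unfolding g_def using h by (intro vert_bound cF) auto
  have B4: "norm (integral {c..d} (\<lambda>y. g (Complex a y))) \<le> integral {c..d} (\<lambda>y. cmod (F (Complex a y))) / h"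
    unfolding g_def using h by (intro vert_bound cF) auto
  have "2*pi*cmod (F z) = norm (contour_integral (rectpath A1 A3) g)"
    by (simp add: CI norm_mult)
  also have "\<dots> \<le> norm (integral {a..b} (\<lambda>x. g (Complex x c))) + norm (integral {c..d} (\<lambda>y. g (Complex b y)))
      + norm (integral {a..b} (\<lambda>x. g (Complex x d))) + norm (integral {c..d} (\<lambda>y. g (Complex a y)))"
    unfolding split I1 I2 I3 I4 by (rule norm4_le)
  also have "\<dots> \<le> (integral {a..b} (\<lambda>x. cmod (F (Complex x c)))
        + integral {a..b} (\<lambda>x. cmod (F (Complex x d)))
        + integral {c..d} (\<lambda>y. cmod (F (Complex a y)))
        + integral {c..d} (\<lambda>y. cmod (F (Complex b y)))) / h"
    using B1 B2 B3 B4 by (simp add: add_divide_distrib)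
  finally show ?thesis using h(1) by (simp add: pos_le_divide_eq)
qed


lemma exists_below_avg:
  fixes \<phi> :: "real \<Rightarrow> ennreal"
  assumes I: "(\<integral>\<^sup>+y. indicator {p..q} y * \<phi> y \<partial>lborel) \<le> ennreal m"
    and L: "q - p = L" "L > 0" and e: "\<epsilon> > 0" and m: "m \<ge> 0"
  shows "\<exists>y\<in>{p..q}. \<phi> y \<le> ennreal (m/L + \<epsilon>)"
proof (rule ccontr)
  assume "\<not> ?thesis"
  then have lt: "\<And>y. y \<in> {p..q} \<Longrightarrow> ennreal (m/L+\<epsilon>) < \<phi> y" by (auto simp: not_le)
  have pq: "p \<le> q" using L by simp
  have "ennreal ((m/L+\<epsilon>) * L) = (\<integral>\<^sup>+y. ennreal (m/L+\<epsilon>) * indicator {p..q} y \<partial>lborel)"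
    using pq L m e by (simp add: nn_integral_cmult_indicator ennreal_mult)
  also have "\<dots> \<le> (\<integral>\<^sup>+y. indicator {p..q} y * \<phi> y \<partial>lborel)"
    by (intro nn_integral_mono) (auto simp: lt less_imp_le split: split_indicator)
  also have "\<dots> \<le> ennreal m" by (rule I)
  finally have "(m/L+\<epsilon>) * L \<le> m" using m by (simp add: ennreal_le_iff)
  moreover have "(m/L+\<epsilon>) * L = m + \<epsilon> * L" using L by (simp add: field_simps)
  ultimately show False using e L mult_pos_pos[of \<epsilon> L] by linarith
qed

lemma seg_le:
  fixes \<phi> :: "real \<Rightarrow> real"
  assumes c: "continuous_on {a..b} \<phi>" and nn: "\<And>x. x\<in>{a..b} \<Longrightarrow> 0 \<le> \<phi> x"
    and le: "\<And>x. x\<in>{a..b} \<Longrightarrow> ennreal (\<phi> x) \<le> \<psi> x"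
    and I: "(\<integral>\<^sup>+x. \<psi> x \<partial>lborel) \<le> ennreal e" and e: "e \<ge> 0"
  shows "integral {a..b} \<phi> \<le> e"
proof -
  have "(\<integral>\<^sup>+x. ennreal (\<phi> x) * indicator {a..b} x \<partial>lborel) = ennreal (integral {a..b} \<phi>)"
    using nn_integral_has_integral_lebesgue'[OF nn integrable_integral[OF integrable_continuous_real[OF c]]]
    by simp
  moreover have "(\<integral>\<^sup>+x. ennreal (\<phi> x) * indicator {a..b} x \<partial>lborel) \<le> (\<integral>\<^sup>+x. \<psi> x \<partial>lborel)"
    by (intro nn_integral_mono) (auto simp: le split: split_indicator)
  ultimately have "ennreal (integral {a..b} \<phi>) \<le> ennreal e" using I by simp
  then show ?thesis using e by (simp add: ennreal_le_iff)
qed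

lemma square_mean:
  fixes F :: "complex \<Rightarrow> complex" and z :: complex and h m :: real
  defines "Q \<equiv> cbox (Complex (Re z - 2*h) (Im z - 2*h)) (Complex (Re z + 2*h) (Im z + 2*h))"
  assumes holo: "F holomorphic_on Q" and h: "h > 0"
    and M: "(\<integral>\<^sup>+w. indicator Q w * ennreal (cmod (F w)) \<partial>lborel) \<le> ennreal m" and m: "m \<ge> 0"
  shows "cmod (F z) \<le> 2*m/(pi*h^2)"
proof -
  define x0 where "x0 = Re z"
  define y0 where "y0 = Im z"
  define G where "G w = indicator Q w * ennreal (cmod (F w))" for w
  have contF: "continuous_on Q F"
    using holo holomorphic_on_imp_continuous_on by blast
  have mr[measurable]: "(\<lambda>w. indicator Q w *\<^sub>R cmod (F w)) \<in> borel_measurable borel"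
    by (rule borel_measurable_continuous_on_indicator[OF _ continuous_on_norm[OF contF]]) (simp add: Q_def)
  have Geq: "G = (\<lambda>w. ennreal (indicator Q w *\<^sub>R cmod (F w)))"
    by (auto simp: G_def fun_eq_iff split: split_indicator)
  have Gm: "G \<in> borel_measurable borel"
    unfolding Geq by measurable
  have F1: "(\<integral>\<^sup>+y. (\<integral>\<^sup>+x. G (Complex x y) \<partial>lborel) \<partial>lborel) \<le> ennreal m"
    using nn_integral_complex_fubini(1)[OF Gm] M by (simp add: G_def)
  have F2: "(\<integral>\<^sup>+x. (\<integral>\<^sup>+y. G (Complex x y) \<partial>lborel) \<partial>lborel) \<le> ennreal m"
    using nn_integral_complex_fubini(2)[OF Gm] M by (simp add: G_def)
  have Hsub: "(\<integral>\<^sup>+y. indicator {p..q} y * (\<integral>\<^sup>+x. G (Complex x y) \<partial>lborel) \<partial>lborel) \<le> ennreal m" for p q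
    by (rule order_trans[OF _ F1], intro nn_integral_mono) (auto split: split_indicator)
  have Vsub: "(\<integral>\<^sup>+x. indicator {p..q} x * (\<integral>\<^sup>+y. G (Complex x y) \<partial>lborel) \<partial>lborel) \<le> ennreal m" for p q
    by (rule order_trans[OF _ F2], intro nn_integral_mono) (auto split: split_indicator)
  have inQ: "Complex x y \<in> Q \<longleftrightarrow> x0 - 2*h \<le> x \<and> x \<le> x0 + 2*h \<and> y0 - 2*h \<le> y \<and> y \<le> y0 + 2*h" for x y
    by (auto simp: Q_def in_cbox_complex_iff x0_def y0_def)
  have cH: "continuous_on {a..b} (\<lambda>x. cmod (F (Complex x c)))"
    if "x0 - 2*h \<le> a" "b \<le> x0 + 2*h" "y0 - 2*h \<le> c" "c \<le> y0 + 2*h" for a b c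
    using that by (intro continuous_on_compose2[OF contF] continuous_intros)
       (auto simp: Complex_eq[symmetric] inQ)
  have cV: "continuous_on {c..d} (\<lambda>y. cmod (F (Complex a y)))"
    if "y0 - 2*h \<le> c" "d \<le> y0 + 2*h" "x0 - 2*h \<le> a" "a \<le> x0 + 2*h" for a c d
    using that by (intro continuous_on_compose2[OF contF] continuous_intros)
       (auto simp: Complex_eq[symmetric] inQ)
  have key: "2*pi*cmod (F z) * h \<le> 4*(m/h) + 4*\<epsilon>" if e: "\<epsilon> > 0" for \<epsilon>
  proof -
    obtain c where c: "c \<in> {y0-2*h..y0-h}" "(\<integral>\<^sup>+x. G (Complex x c) \<partial>lborel) \<le> ennreal (m/h+\<epsilon>)"
      using exists_below_avg[OF Hsub[of "y0-2*h" "y0-h"] _ h e m] by auto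
    obtain d where d: "d \<in> {y0+h..y0+2*h}" "(\<integral>\<^sup>+x. G (Complex x d) \<partial>lborel) \<le> ennreal (m/h+\<epsilon>)"
      using exists_below_avg[OF Hsub[of "y0+h" "y0+2*h"] _ h e m] by auto
    obtain a where a: "a \<in> {x0-2*h..x0-h}" "(\<integral>\<^sup>+y. G (Complex a y) \<partial>lborel) \<le> ennreal (m/h+\<epsilon>)"
      using exists_below_avg[OF Vsub[of "x0-2*h" "x0-h"] _ h e m] by auto
    obtain b where b: "b \<in> {x0+h..x0+2*h}" "(\<integral>\<^sup>+y. G (Complex b y) \<partial>lborel) \<le> ennreal (m/h+\<epsilon>)"
      using exists_below_avg[OF Vsub[of "x0+h" "x0+2*h"] _ h e m] by auto
    have sub: "cbox (Complex a c) (Complex b d) \<subseteq> Q"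
      using a b c d by (auto simp: in_cbox_complex_iff inQ[symmetric]
          intro!: subsetI) (auto simp: Q_def in_cbox_complex_iff x0_def y0_def)
    have R: "2*pi*cmod (F z) * h \<le> integral {a..b} (\<lambda>x. cmod (F (Complex x c)))
        + integral {a..b} (\<lambda>x. cmod (F (Complex x d)))
        + integral {c..d} (\<lambda>y. cmod (F (Complex a y)))
        + integral {c..d} (\<lambda>y. cmod (F (Complex b y)))"
      using a b c d h by (intro rect_bound holomorphic_on_subset[OF holo sub]) (auto simp: x0_def y0_def)
    have e0: "m/h + \<epsilon> \<ge> 0" using m h e by simp
    have "integral {a..b} (\<lambda>x. cmod (F (Complex x c))) \<le> m/h + \<epsilon>"
      using a b c by (intro seg_le[OF cH _ _ c(2) e0]) (auto simp: G_def inQ)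
    moreover have "integral {a..b} (\<lambda>x. cmod (F (Complex x d))) \<le> m/h + \<epsilon>"
      using a b d by (intro seg_le[OF cH _ _ d(2) e0]) (auto simp: G_def inQ)
    moreover have "integral {c..d} (\<lambda>y. cmod (F (Complex a y))) \<le> m/h + \<epsilon>"
      using a c d by (intro seg_le[OF cV _ _ a(2) e0]) (auto simp: G_def inQ)
    moreover have "integral {c..d} (\<lambda>y. cmod (F (Complex b y))) \<le> m/h + \<epsilon>"
      using b c d by (intro seg_le[OF cV _ _ b(2) e0]) (auto simp: G_def inQ)
    ultimately show ?thesis using R by linarith
  qed
  have "2*pi*cmod (F z) * h \<le> 4*(m/h)"
  proof (rule field_le_epsilon)
    fix e :: real assume "e > 0"
    then show "2*pi*cmod (F z) * h \<le> 4*(m/h) + e" using key[of "e/4"] by simp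
  qed
  then have "cmod (F z) * (pi*h^2) \<le> 2*m"
    using h by (simp add: field_simps power2_eq_square)
  then show ?thesis using h by (simp add: pos_le_divide_eq mult_pos_pos)
qed


lemma gf_0:
  assumes "growth_function \<Phi>" shows "\<Phi> 0 = 0"
proof -
  from assms have im: "\<Phi> ` {0..} = {0..}" and mo: "mono_on {0..} \<Phi>" by (auto simp: growth_function_def)
  obtain a where a: "a \<ge> 0" "\<Phi> a = 0" using im by (metis atLeast_iff imageE order_refl)
  have "\<Phi> 0 \<le> \<Phi> a" using mono_onD[OF mo, of 0 a] a by simp
  moreover have "\<Phi> 0 \<ge> 0" using im by auto
  ultimately show ?thesis using a by simp
qed

lemma gf_nonneg:
  assumes "growth_function \<Phi>" "x \<ge> 0" shows "\<Phi> x \<ge> 0"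
  using assms by (auto simp: growth_function_def)

lemma gf_mono:
  assumes "growth_function \<Phi>" "0 \<le> x" "x \<le> y" shows "\<Phi> x \<le> \<Phi> y"
  using assms by (auto simp: growth_function_def intro: mono_onD)

lemma gf_cont:
  assumes "growth_function \<Phi>" shows "continuous_on {0..} \<Phi>"
  using assms by (auto simp: growth_function_def)

lemma conv_scale:
  assumes gf: "growth_function \<Phi>" and cv: "convex_on {0..} \<Phi>"
    and "0 \<le> \<mu>" "\<mu> \<le> 1" "0 \<le> x"
  shows "\<Phi> (\<mu> * x) \<le> \<mu> * \<Phi> x"
proof -
  have "\<Phi> ((1 - \<mu>) *\<^sub>R 0 + \<mu> *\<^sub>R x) \<le> (1 - \<mu>) * \<Phi> 0 + \<mu> * \<Phi> x"
    using assms by (intro convex_onD[OF cv]) auto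
  then show ?thesis using gf_0[OF gf] by simp
qed

lemma growth_inv_ge:
  assumes gf: "growth_function \<Phi>" and cv: "convex_on {0..} \<Phi>"
    and t: "t > 0" and s: "s \<ge> 0" "\<Phi> s \<le> t"
  shows "s \<le> growth_inv \<Phi> t"
  unfolding growth_inv_def
proof (rule cInf_greatest)
  have "t \<in> \<Phi> ` {0..}" using gf t by (auto simp: growth_function_def)
  then show "{s. 0 \<le> s \<and> t \<le> \<Phi> s} \<noteq> {}" by force
next
  fix s' assume "s' \<in> {s. 0 \<le> s \<and> t \<le> \<Phi> s}"
  then have s': "0 \<le> s'" "t \<le> \<Phi> s'" by auto
  show "s \<le> s'"
  proof (rule ccontr)
    assume "\<not> s \<le> s'"
    then have lt: "s' < s" by simp
    then have spos: "s > 0" using s' by simp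
    have "\<Phi> s' = \<Phi> ((s'/s) * s)" using spos by simp
    also have "\<dots> \<le> (s'/s) * \<Phi> s"
      using s' lt spos s by (intro conv_scale[OF gf cv]) auto
    also have "\<dots> \<le> (s'/s) * t"
      using s s' spos by (intro mult_left_mono) auto
    also have "\<dots> < t"
      using lt spos t s' by (simp add: divide_less_eq)
    finally show False using s' by simp
  qed
qed

lemma jensen_box:
  fixes F :: "complex \<Rightarrow> complex" and \<Phi> :: "real \<Rightarrow> real"
  assumes gf: "growth_function \<Phi>" and cv: "convex_on {0..} \<Phi>"
    and Qc: "compact Q" "Q \<in> sets borel" and mu: "emeasure lborel Q = ennreal \<mu>" "\<mu> > 0"
    and contF: "continuous_on Q F"
  obtains E1 E2 where "E1 \<ge> 0" "\<Phi> E1 \<le> E2"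
    "(\<integral>\<^sup>+w. indicator Q w * ennreal (cmod (F w)) \<partial>lborel) = ennreal (E1 * \<mu>)"
    "(\<integral>\<^sup>+w. indicator Q w * ennreal (\<Phi> (cmod (F w))) \<partial>lborel) = ennreal (E2 * \<mu>)"
proof -
  define U where "U = uniform_measure lborel Q"
  interpret U: prob_space U unfolding U_def by (rule prob_space_uniform_measure) (use mu in auto)
  define X where "X w = indicator Q w * cmod (F w)" for w
  define q where "q x = \<Phi> (max 0 x)" for x
  have P0: "\<Phi> 0 = 0" by (rule gf_0[OF gf])
  obtain B0 where B0: "\<And>w. w \<in> Q \<Longrightarrow> cmod (F w) \<le> B0"
    using compact_imp_bounded[OF compact_continuous_image[OF contF Qc(1)]]
    by (auto simp: bounded_iff)
  define B where "B = max B0 0"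
  have B: "0 \<le> X w \<and> X w \<le> B" for w
  proof (cases "w \<in> Q")
    case True then show ?thesis using B0[OF True] by (simp add: X_def B_def le_max_iff_disj)
  next
    case False then show ?thesis by (simp add: X_def B_def)
  qed
  have Xm[measurable]: "X \<in> borel_measurable borel"
    using borel_measurable_continuous_on_indicator[OF Qc(2) continuous_on_norm[OF contF]]
    by (simp add: X_def[abs_def])
  have contq: "continuous_on UNIV q"
    unfolding q_def
    by (rule continuous_on_compose2[OF gf_cont[OF gf]]) (auto intro!: continuous_intros)
  have qm[measurable]: "q \<in> borel_measurable borel"
    by (rule borel_measurable_continuous_onI[OF contq])
  have XmU: "X \<in> borel_measurable U" unfolding U_def by measurable
  have qXmU: "(\<lambda>w. q (X w)) \<in> borel_measurable U" unfolding U_def by measurable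
  have intX: "integrable U X"
    by (rule U.integrable_const_bound[where B=B]) (use B XmU in auto)
  have qle: "0 \<le> q (X w) \<and> q (X w) \<le> \<Phi> B" for w
    using B[of w] by (auto simp: q_def intro!: gf_nonneg[OF gf] gf_mono[OF gf])
  have intqX: "integrable U (\<lambda>w. q (X w))"
    by (rule U.integrable_const_bound[where B="\<Phi> B"]) (use qle qXmU in auto)
  have cvq: "convex_on UNIV q"
  proof (rule convex_onI)
    fix t x y :: real assume t: "0 < t" "t < 1"
    have "q ((1 - t) *\<^sub>R x + t *\<^sub>R y) \<le> \<Phi> ((1 - t) *\<^sub>R max 0 x + t *\<^sub>R max 0 y)"
    proof -
      have a1: "(1-t)*x \<le> (1-t)*max 0 x" using t by (intro mult_left_mono) auto
      have a2: "t*y \<le> t*max 0 y" using t by (intro mult_left_mono) auto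
      have a3: "0 \<le> (1-t)*max 0 x" "0 \<le> t*max 0 y" using t by auto
      show ?thesis unfolding q_def using a1 a2 a3
        by (intro gf_mono[OF gf]) auto
    qed
    also have "\<dots> \<le> (1 - t) * \<Phi> (max 0 x) + t * \<Phi> (max 0 y)"
      using t by (intro convex_onD[OF cv]) auto
    finally show "q ((1 - t) *\<^sub>R x + t *\<^sub>R y) \<le> (1 - t) * q x + t * q y" by (simp add: q_def)
  qed auto
  have J: "q (U.expectation X) \<le> U.expectation (\<lambda>w. q (X w))"
    by (rule U.jensens_inequality[where I=UNIV, OF intX _ _ intqX cvq]) auto
  define E1 where "E1 = U.expectation X"
  define E2 where "E2 = U.expectation (\<lambda>w. q (X w))"
  have E1nn: "E1 \<ge> 0" unfolding E1_def using B by (intro Bochner_Integration.integral_nonneg) auto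
  have qE1: "q E1 = \<Phi> E1" using E1nn by (simp add: q_def)
  have muQ: "emeasure lborel Q \<noteq> 0" "emeasure lborel Q \<noteq> \<top>" using mu by auto
  have "ennreal E1 = (\<integral>\<^sup>+w. ennreal (X w) \<partial>U)"
    unfolding E1_def using B by (intro nn_integral_eq_integral[symmetric] intX) auto
  also have "\<dots> = (\<integral>\<^sup>+w. ennreal (X w) * indicator Q w \<partial>lborel) / emeasure lborel Q"
    unfolding U_def by (rule nn_integral_uniform_measure) (auto simp: Qc)
  finally have e1: "ennreal E1 * ennreal \<mu> = (\<integral>\<^sup>+w. ennreal (X w) * indicator Q w \<partial>lborel)"
    using muQ mu by (simp add: ennreal_divide_times ennreal_divide_self)
  have "ennreal E2 = (\<integral>\<^sup>+w. ennreal (q (X w)) \<partial>U)"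
    unfolding E2_def using qle by (intro nn_integral_eq_integral[symmetric] intqX) auto
  also have "\<dots> = (\<integral>\<^sup>+w. ennreal (q (X w)) * indicator Q w \<partial>lborel) / emeasure lborel Q"
    unfolding U_def by (rule nn_integral_uniform_measure) (auto simp: Qc)
  finally have e2: "ennreal E2 * ennreal \<mu> = (\<integral>\<^sup>+w. ennreal (q (X w)) * indicator Q w \<partial>lborel)"
    using muQ mu by (simp add: ennreal_divide_times ennreal_divide_self)
  show ?thesis
  proof
    show "E1 \<ge> 0" by (rule E1nn)
    show "\<Phi> E1 \<le> E2" using J qE1 by (simp add: E1_def E2_def)
    show "(\<integral>\<^sup>+w. indicator Q w * ennreal (cmod (F w)) \<partial>lborel) = ennreal (E1 * \<mu>)"
    proof -
      have "(\<lambda>w. ennreal (X w) * indicator Q w) = (\<lambda>w. indicator Q w * ennreal (cmod (F w)))"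
        by (auto simp: fun_eq_iff X_def split: split_indicator)
      then show ?thesis using e1 E1nn mu by (simp add: ennreal_mult)
    qed
    show "(\<integral>\<^sup>+w. indicator Q w * ennreal (\<Phi> (cmod (F w))) \<partial>lborel) = ennreal (E2 * \<mu>)"
    proof -
      have E2nn: "E2 \<ge> 0" unfolding E2_def using qle by (intro Bochner_Integration.integral_nonneg) auto
      have "(\<lambda>w. ennreal (q (X w)) * indicator Q w) = (\<lambda>w. indicator Q w * ennreal (\<Phi> (cmod (F w))))"
        by (auto simp: fun_eq_iff q_def X_def P0 split: split_indicator)
      then show ?thesis using e2 E2nn mu by (simp add: ennreal_mult)
    qed
  qed
qed


lemma open_uhp: "open upper_half_plane"
  unfolding upper_half_plane_def by (simp add: open_halfspace_Im_gt)

lemma integrand_meas: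
  assumes holo: "F holomorphic_on upper_half_plane" and gf: "growth_function \<Phi>"
  shows "(\<lambda>z. indicator upper_half_plane z * ennreal (\<Phi> (cmod (F z)) * Im z powr \<alpha>)) \<in> borel_measurable borel"
proof -
  have cF: "continuous_on upper_half_plane F" using holo holomorphic_on_imp_continuous_on by blast
  have c1: "continuous_on upper_half_plane (\<lambda>z. \<Phi> (cmod (F z)))"
    by (rule continuous_on_compose2[OF gf_cont[OF gf] continuous_on_norm[OF cF]]) auto
  have c: "continuous_on upper_half_plane (\<lambda>z. \<Phi> (cmod (F z)) * Im z powr \<alpha>)"
    by (intro continuous_intros c1) (auto simp: upper_half_plane_def)
  have mr[measurable]: "(\<lambda>z. indicator upper_half_plane z *\<^sub>R (\<Phi> (cmod (F z)) * Im z powr \<alpha>)) \<in> borel_measurable borel"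
    by (rule borel_measurable_continuous_on_indicator[OF _ c]) (simp add: open_uhp borel_open)
  have eq: "(\<lambda>z. indicator upper_half_plane z * ennreal (\<Phi> (cmod (F z)) * Im z powr \<alpha>))
      = (\<lambda>z. ennreal (indicator upper_half_plane z *\<^sub>R (\<Phi> (cmod (F z)) * Im z powr \<alpha>)))"
    by (auto simp: fun_eq_iff split: split_indicator)
  show ?thesis unfolding eq by measurable
qed

lemma lux_nonempty:
  assumes gf: "growth_function \<Phi>" and cv: "convex_on {0..} \<Phi>" and f: "f \<in> bergman_orlicz \<Phi> \<alpha>"
  shows "\<exists>r>0. orlicz_modular \<Phi> \<alpha> (\<lambda>z. f z / of_real r) \<le> 1"
proof -
  have holo: "f holomorphic_on upper_half_plane" and fin: "orlicz_modular \<Phi> \<alpha> f < \<infinity>"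
    using f by (auto simp: bergman_orlicz_def)
  obtain k where k: "orlicz_modular \<Phi> \<alpha> f = ennreal k" "k \<ge> 0"
    using fin by (cases "orlicz_modular \<Phi> \<alpha> f" rule: ennreal_cases) auto
  define r where "r = k + 1"
  have r: "r > 0" "r \<ge> 1" using k by (auto simp: r_def)
  have "orlicz_modular \<Phi> \<alpha> (\<lambda>z. f z / of_real r)
      \<le> (\<integral>\<^sup>+z. ennreal (1/r) * (indicator upper_half_plane z * ennreal (\<Phi> (cmod (f z)) * Im z powr \<alpha>)) \<partial>lborel)"
    unfolding orlicz_modular_def
  proof (intro nn_integral_mono)
    fix z
    have "\<Phi> (cmod (f z) / r) * Im z powr \<alpha> \<le> (1/r) * (\<Phi> (cmod (f z)) * Im z powr \<alpha>)"
    proof -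
      have "\<Phi> ((1/r) * cmod (f z)) \<le> (1/r) * \<Phi> (cmod (f z))"
        using r by (intro conv_scale[OF gf cv]) auto
      then have "\<Phi> (cmod (f z) / r) * Im z powr \<alpha> \<le> ((1/r) * \<Phi> (cmod (f z))) * Im z powr \<alpha>"
        by (intro mult_right_mono) auto
      then show ?thesis by (simp add: mult.assoc)
    qed
    moreover have nn: "0 \<le> \<Phi> (cmod (f z)) * Im z powr \<alpha>" using gf_nonneg[OF gf] by simp
    moreover have "ennreal (1/r) * ennreal (\<Phi> (cmod (f z)) * Im z powr \<alpha>) = ennreal ((1/r) * (\<Phi> (cmod (f z)) * Im z powr \<alpha>))"
      using nn r by (subst ennreal_mult[symmetric]) auto
    ultimately show "indicator upper_half_plane z * ennreal (\<Phi> (cmod (f z / of_real r)) * Im z powr \<alpha>)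
        \<le> ennreal (1/r) * (indicator upper_half_plane z * ennreal (\<Phi> (cmod (f z)) * Im z powr \<alpha>))"
      using r by (auto simp: norm_divide intro!: ennreal_leI split: split_indicator)
  qed
  also have "\<dots> = ennreal (1/r) * orlicz_modular \<Phi> \<alpha> f"
    unfolding orlicz_modular_def using integrand_meas[OF holo gf, of \<alpha>]
    by (intro nn_integral_cmult) simp
  also have "\<dots> = ennreal (k/r)" using k r by (simp add: ennreal_mult[symmetric])
  also have "\<dots> \<le> 1" using k r by (simp add: r_def)
  finally show ?thesis using r by blast
qed


lemma powr_box_lower:
  fixes y w \<alpha> :: real
  assumes y: "y > 0" and w: "y/2 \<le> w" "w \<le> 3*y/2"
  shows "min ((1/2) powr \<alpha>) ((3/2) powr \<alpha>) * y powr \<alpha> \<le> w powr \<alpha>"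
proof -
  define s where "s = w / y"
  have s: "1/2 \<le> s" "s \<le> 3/2" using y w by (auto simp: s_def field_simps)
  have ws: "w = s * y" using y by (simp add: s_def)
  have "min ((1/2) powr \<alpha>) ((3/2) powr \<alpha>) \<le> s powr \<alpha>"
  proof (cases "\<alpha> \<ge> 0")
    case True
    then have "(1/2) powr \<alpha> \<le> s powr \<alpha>" using s by (intro powr_mono2) auto
    then show ?thesis by simp
  next
    case False
    then have "(3/2) powr \<alpha> \<le> s powr \<alpha>" using s by (intro powr_mono2') auto
    then show ?thesis by simp
  qed
  then have "min ((1/2) powr \<alpha>) ((3/2) powr \<alpha>) * y powr \<alpha> \<le> s powr \<alpha> * y powr \<alpha>"
    by (intro mult_right_mono) auto
  also have "\<dots> = w powr \<alpha>" using s y by (simp add: ws powr_mult)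
  finally show ?thesis .
qed

lemma pointwise_bound:
  fixes f :: "complex \<Rightarrow> complex" and \<Phi> :: "real \<Rightarrow> real"
  assumes gf: "growth_function \<Phi>" and cv: "convex_on {0..} \<Phi>"
    and holo: "f holomorphic_on upper_half_plane" and r: "r > 0"
    and md: "orlicz_modular \<Phi> \<alpha> (\<lambda>z. f z / of_real r) \<le> 1"
    and z: "z \<in> upper_half_plane"
  shows "cmod (f z) \<le> (32/(pi * min (min ((1/2) powr \<alpha>) ((3/2) powr \<alpha>)) 1))
            * growth_inv \<Phi> (1 / (Im z) powr (\<alpha>+2)) * r"
proof -
  define y where "y = Im z"
  have y: "y > 0" using z by (simp add: y_def upper_half_plane_def)
  define h where "h = y/4"
  have h: "h > 0" using y by (simp add: h_def)
  define F where "F w = f w / of_real r" for w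
  define Q where "Q = cbox (Complex (Re z - 2*h) (Im z - 2*h)) (Complex (Re z + 2*h) (Im z + 2*h))"
  define \<kappa> where "\<kappa> = min ((1/2) powr \<alpha>) ((3/2) powr \<alpha>)"
  define \<kappa>' where "\<kappa>' = min \<kappa> 1"
  have kpos: "\<kappa> > 0" "\<kappa>' > 0" "\<kappa>' \<le> 1" "\<kappa>' \<le> \<kappa>" by (auto simp: \<kappa>_def \<kappa>'_def)
  have inQ: "w \<in> Q \<longleftrightarrow> Re z - 2*h \<le> Re w \<and> Re w \<le> Re z + 2*h \<and> y - 2*h \<le> Im w \<and> Im w \<le> y + 2*h" for w
    by (auto simp: Q_def in_cbox_complex_iff y_def)
  have QH: "Q \<subseteq> upper_half_plane"
    using y by (auto simp: inQ upper_half_plane_def h_def)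
  have holoF: "F holomorphic_on upper_half_plane"
    unfolding F_def using holo r by (intro holomorphic_intros) auto
  have holoQ: "F holomorphic_on Q" using holomorphic_on_subset[OF holoF QH] .
  have contQ: "continuous_on Q F" using holoQ holomorphic_on_imp_continuous_on by blast
  have muQ: "emeasure lborel Q = ennreal (16*h^2)"
    unfolding Q_def using h
    by (subst emeasure_lborel_cbox) (auto simp: Basis_complex_def power2_eq_square ennreal_mult[symmetric])
  obtain E1 E2 where E: "E1 \<ge> 0" "\<Phi> E1 \<le> E2"
    "(\<integral>\<^sup>+w. indicator Q w * ennreal (cmod (F w)) \<partial>lborel) = ennreal (E1 * (16*h^2))"
    "(\<integral>\<^sup>+w. indicator Q w * ennreal (\<Phi> (cmod (F w))) \<partial>lborel) = ennreal (E2 * (16*h^2))"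
    using jensen_box[OF gf cv _ _ muQ _ contQ] h by (auto simp: Q_def)
  have sm: "cmod (F z) \<le> 2*(E1 * (16*h^2))/(pi*h^2)"
    by (rule square_mean[OF holoQ[unfolded Q_def] h]) (use E(3)[unfolded Q_def] E(1) h in auto)
  then have sm2: "cmod (F z) \<le> (32/pi) * E1" using h by (simp add: field_simps power2_eq_square)
  have ypos: "y powr \<alpha> > 0" using y by simp
  have "ennreal (E2 * (16*h^2)) \<le> (\<integral>\<^sup>+w. ennreal (1/(\<kappa> * y powr \<alpha>)) *
          (indicator upper_half_plane w * ennreal (\<Phi> (cmod (F w)) * Im w powr \<alpha>)) \<partial>lborel)"
    unfolding E(4)[symmetric]
  proof (intro nn_integral_mono)
    fix w
    show "indicator Q w * ennreal (\<Phi> (cmod (F w))) \<le> ennreal (1/(\<kappa> * y powr \<alpha>)) *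
          (indicator upper_half_plane w * ennreal (\<Phi> (cmod (F w)) * Im w powr \<alpha>))"
    proof (cases "w \<in> Q")
      case True
      then have wH: "w \<in> upper_half_plane" using QH by auto
      have lo: "\<kappa> * y powr \<alpha> \<le> Im w powr \<alpha>"
        unfolding \<kappa>_def using True y by (intro powr_box_lower) (auto simp: inQ h_def)
      have P0: "0 \<le> \<Phi> (cmod (F w))" using gf_nonneg[OF gf] by simp
      have "\<Phi> (cmod (F w)) = \<Phi> (cmod (F w)) * ((\<kappa> * y powr \<alpha>) / (\<kappa> * y powr \<alpha>))"
        using kpos ypos by simp
      also have "\<dots> \<le> \<Phi> (cmod (F w)) * (Im w powr \<alpha> / (\<kappa> * y powr \<alpha>))"
        using lo kpos ypos P0 by (intro mult_left_mono divide_right_mono) auto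
      also have "\<dots> = 1/(\<kappa> * y powr \<alpha>) * (\<Phi> (cmod (F w)) * Im w powr \<alpha>)" by simp
      finally have le: "\<Phi> (cmod (F w)) \<le> 1/(\<kappa> * y powr \<alpha>) * (\<Phi> (cmod (F w)) * Im w powr \<alpha>)" .
      have nn2: "0 \<le> \<Phi> (cmod (F w)) * Im w powr \<alpha>" using P0 by simp
      have "ennreal (1/(\<kappa> * y powr \<alpha>)) * ennreal (\<Phi> (cmod (F w)) * Im w powr \<alpha>)
           = ennreal (1/(\<kappa> * y powr \<alpha>) * (\<Phi> (cmod (F w)) * Im w powr \<alpha>))"
        using nn2 kpos ypos by (subst ennreal_mult[symmetric]) auto
      then show ?thesis using True wH le by (simp add: ennreal_leI)
    qed simp
  qed
  also have "\<dots> = ennreal (1/(\<kappa> * y powr \<alpha>)) * orlicz_modular \<Phi> \<alpha> F"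
    unfolding orlicz_modular_def using integrand_meas[OF holoF gf, of \<alpha>]
    by (intro nn_integral_cmult) simp
  also have "\<dots> \<le> ennreal (1/(\<kappa> * y powr \<alpha>)) * 1"
    using md by (intro mult_left_mono) (auto simp: F_def[abs_def])
  finally have "E2 * (16*h^2) \<le> 1/(\<kappa> * y powr \<alpha>)"
    using kpos ypos by (simp add: ennreal_le_iff)
  then have E2le: "E2 \<le> 1/(\<kappa> * y powr (\<alpha>+2))"
    using kpos ypos h y
    by (simp add: h_def powr_add field_simps power2_eq_square)
  define t where "t = 1 / (Im z) powr (\<alpha>+2)"
  have tpos: "t > 0" using y by (simp add: t_def y_def[symmetric])
  define s where "s = \<kappa>' * cmod (F z) / (32/pi)"
  have s0: "s \<ge> 0" using kpos by (simp add: s_def)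
  have sle: "s \<le> \<kappa>' * E1" using sm2 kpos by (simp add: s_def field_simps)
  have "\<Phi> s \<le> \<Phi> (\<kappa>' * E1)" using s0 sle by (rule gf_mono[OF gf])
  also have "\<dots> \<le> \<kappa>' * \<Phi> E1" using kpos E(1) by (intro conv_scale[OF gf cv]) auto
  also have "\<dots> \<le> \<kappa>' * E2" using kpos E(2) by (intro mult_left_mono) auto
  also have "\<dots> \<le> \<kappa>' * (1/(\<kappa> * y powr (\<alpha>+2)))" using kpos E2le by (intro mult_left_mono) auto
  also have "\<dots> \<le> \<kappa> * (1/(\<kappa> * y powr (\<alpha>+2)))" using kpos y by (intro mult_right_mono) auto
  also have "\<dots> = t" using kpos by (simp add: t_def y_def)
  finally have "s \<le> growth_inv \<Phi> t" by (intro growth_inv_ge[OF gf cv tpos s0])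
  then have "cmod (F z) \<le> (32/(pi*\<kappa>')) * growth_inv \<Phi> t"
    using kpos by (simp add: s_def field_simps)
  then have "cmod (f z) / r \<le> (32/(pi*\<kappa>')) * growth_inv \<Phi> t"
    using r by (simp add: F_def norm_divide)
  then show ?thesis using r by (simp add: \<kappa>'_def \<kappa>_def t_def pos_divide_le_eq mult.commute mult.left_commute)
qed


theorem lemma3p10:
  fixes \<alpha> :: real
  assumes "\<alpha> > -1"
  shows "\<exists>C>0. \<forall>\<Phi> f z. growth_function \<Phi> \<and> convex_on {0..} \<Phi> \<and>
            f \<in> bergman_orlicz \<Phi> \<alpha> \<and> z \<in> upper_half_plane \<longrightarrow>
            cmod (f z) \<le> C * growth_inv \<Phi> (1 / (Im z) powr (\<alpha> + 2)) * lux_norm \<Phi> \<alpha> f"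
proof -
  define C where "C = 32/(pi * min (min ((1/2) powr \<alpha>) ((3/2) powr \<alpha>)) 1)"
  have Cpos: "C > 0" by (simp add: C_def)
  show ?thesis
  proof (intro exI[of _ C] conjI allI impI Cpos)
    fix \<Phi> :: "real \<Rightarrow> real" and f :: "complex \<Rightarrow> complex" and z :: complex
    assume H: "growth_function \<Phi> \<and> convex_on {0..} \<Phi> \<and> f \<in> bergman_orlicz \<Phi> \<alpha> \<and> z \<in> upper_half_plane"
    then have gf: "growth_function \<Phi>" and cv: "convex_on {0..} \<Phi>" and f: "f \<in> bergman_orlicz \<Phi> \<alpha>"
      and z: "z \<in> upper_half_plane" by auto
    have holo: "f holomorphic_on upper_half_plane" using f by (simp add: bergman_orlicz_def)
    define A where "A = {r. r > 0 \<and> orlicz_modular \<Phi> \<alpha> (\<lambda>z. f z / of_real r) \<le> 1}"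
    define g where "g = growth_inv \<Phi> (1 / (Im z) powr (\<alpha> + 2))"
    have Ane: "A \<noteq> {}" using lux_nonempty[OF gf cv f] by (auto simp: A_def)
    have lux: "lux_norm \<Phi> \<alpha> f = Inf A" by (simp add: lux_norm_def A_def)
    have bnd: "cmod (f z) \<le> C * g * r" if "r \<in> A" for r
      using that pointwise_bound[OF gf cv holo _ _ z] by (auto simp: A_def C_def g_def)
    have A0: "\<And>r. r \<in> A \<Longrightarrow> 0 \<le> r" by (auto simp: A_def)
    show "cmod (f z) \<le> C * g * lux_norm \<Phi> \<alpha> f"
    proof (cases "C * g > 0")
      case True
      have "cmod (f z) / (C * g) \<le> Inf A"
      proof (rule cInf_greatest[OF Ane])
        fix r assume "r \<in> A"
        then show "cmod (f z) / (C * g) \<le> r" using bnd[of r] True by (simp add: divide_le_eq mult.commute)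
      qed
      then show ?thesis using True lux by (simp add: divide_le_eq mult.commute)
    next
      case False
      obtain r0 where r0: "r0 \<in> A" using Ane by auto
      have "0 \<le> r0" using A0 r0 by auto
      have "C * g * r0 \<le> 0" using False \<open>0 \<le> r0\<close> by (simp add: mult_nonpos_nonneg)
      then have fz: "cmod (f z) = 0" using bnd[OF r0] norm_ge_zero[of "f z"] by linarith
      have "0 \<le> Inf A" using Ane A0 by (intro cInf_greatest) auto
      have g0: "0 \<le> g"
        unfolding g_def growth_inv_def
      proof (rule cInf_greatest)
        have "1 / (Im z) powr (\<alpha> + 2) \<in> \<Phi> ` {0..}" using gf by (auto simp: growth_function_def)
        then show "{s. 0 \<le> s \<and> 1 / (Im z) powr (\<alpha> + 2) \<le> \<Phi> s} \<noteq> {}" by force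
      qed auto
      then have Cg0: "C * g = 0" using False Cpos by (simp add: not_less) (meson mult_pos_pos less_eq_real_def not_le Cpos)
      show ?thesis by (simp only: Cg0 fz mult_zero_left order_refl)
    qed
  qed
qed

end
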